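(* Define, for $n\ge 0$, $$d_n(q)=\sum_{\pi\in \mathcal I^C_{2n}(321)}q^{\mathrm{des}^+(\pi)},\qquad p_n(q)=\sum_{\pi\in \mathcal I^C_{2n}(321)}q^{\mathrm{maj}^+(\pi)}$$ (with $\mathcal I^C_0(321)$ consisting of the empty permutation). Then for $n\ge 2$, $$d_n(q)=2d_{n-1}(q)+(q-1)d_{n-2}(q),\qquad p_n(q)=(1+q)p_{n-1}(q)+(q^n-q)p_{n-2}(q).$$
   Context: A permutation $\pi\in\mathcal S_m$ is centrosymmetric if $\pi(i)+\pi(m+1-i)=m+1$ for all $i$; $\mathcal I^C_m(321)$ is the set of centrosymmetric involutions in $\mathcal S_m$ avoiding $321$. For $\pi\in\mathcal S_{2n}$, $\mathrm{Des}^+(\pi)$ is the set of positions $i\in\{1,\dots,n\}$ with $\pi(i)>\pi(i+1)$, $\mathrm{des}^+(\pi)=|\mathrm{Des}^+(\pi)|$ and $\mathrm{maj}^+(\pi)=\sum_{i\in\mathrm{Des}^+(\pi)}i$. *)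

theory Defs
  imports "HOL-Combinatorics.Permutations"
begin

text \<open>Permutations of [m] = {1..m} are functions nat => nat permuting {1..m}
  (identity outside). For m = 0 the only one is the identity (empty permutation).\<close>

definition centrosymmetric :: "nat \<Rightarrow> (nat \<Rightarrow> nat) \<Rightarrow> bool" where
  "centrosymmetric m \<pi> \<longleftrightarrow> (\<forall>i\<in>{1..m}. \<pi> i + \<pi> (m + 1 - i) = m + 1)"

definition is_involution :: "nat \<Rightarrow> (nat \<Rightarrow> nat) \<Rightarrow> bool" where
  "is_involution m \<pi> \<longleftrightarrow> (\<forall>i\<in>{1..m}. \<pi> (\<pi> i) = i)"

definition avoids321 :: "nat \<Rightarrow> (nat \<Rightarrow> nat) \<Rightarrow> bool" where
  "avoids321 m \<pi> \<longleftrightarrow>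
     \<not> (\<exists>i j k. 1 \<le> i \<and> i < j \<and> j < k \<and> k \<le> m \<and> \<pi> i > \<pi> j \<and> \<pi> j > \<pi> k)"

definition ICinv321 :: "nat \<Rightarrow> (nat \<Rightarrow> nat) set" where
  "ICinv321 m = {\<pi>. \<pi> permutes {1..m} \<and> is_involution m \<pi> \<and> centrosymmetric m \<pi> \<and> avoids321 m \<pi>}"

definition DesPlus :: "nat \<Rightarrow> (nat \<Rightarrow> nat) \<Rightarrow> nat set" where
  "DesPlus n \<pi> = {i\<in>{1..n}. \<pi> i > \<pi> (i + 1)}"

definition desPlus :: "nat \<Rightarrow> (nat \<Rightarrow> nat) \<Rightarrow> nat" where
  "desPlus n \<pi> = card (DesPlus n \<pi>)"

definition majPlus :: "nat \<Rightarrow> (nat \<Rightarrow> nat) \<Rightarrow> nat" where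
  "majPlus n \<pi> = \<Sum> (DesPlus n \<pi>)"

definition dpoly :: "nat \<Rightarrow> 'a::comm_ring_1 \<Rightarrow> 'a" where
  "dpoly n q = (\<Sum>\<pi>\<in>ICinv321 (2*n). q ^ desPlus n \<pi>)"

definition ppoly :: "nat \<Rightarrow> 'a::comm_ring_1 \<Rightarrow> 'a" where
  "ppoly n q = (\<Sum>\<pi>\<in>ICinv321 (2*n). q ^ majPlus n \<pi>)"

end

theory Submission
  imports Defs
begin

definition cnt :: "(nat \<Rightarrow> bool) \<Rightarrow> nat \<Rightarrow> nat" where
  "cnt P j = card {t \<in> {1..j}. P t}"

lemma cnt_0[simp]: "cnt P 0 = 0"
  by (simp add: cnt_def)

lemma cnt_Suc: "cnt P (Suc j) = cnt P j + (if P (Suc j) then 1 else 0)"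
proof -
  have "{t \<in> {1..Suc j}. P t} = (if P (Suc j) then insert (Suc j) {t \<in> {1..j}. P t} else {t \<in> {1..j}. P t})"
    by (auto simp: le_Suc_eq)
  then show ?thesis by (simp add: cnt_def)
qed

lemma cnt_mono: "i \<le> j \<Longrightarrow> cnt P i \<le> cnt P j"
  unfolding cnt_def by (rule card_mono) auto

lemma cnt_strict: assumes "P j" "i < j" shows "cnt P i < cnt P j"
proof -
  obtain j' where j: "j = Suc j'" using assms(2) by (cases j) auto
  have "cnt P i \<le> cnt P j'" using assms j by (intro cnt_mono) auto
  then show ?thesis using assms j by (simp add: cnt_Suc)
qed

lemma cnt_pos: assumes "P j" "1 \<le> j" shows "1 \<le> cnt P j"
proof -
  obtain j' where j: "j = Suc j'" using assms(2) by (cases j) auto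
  then show ?thesis using assms by (simp add: cnt_Suc)
qed

lemma cnt_uniq: assumes "P i" "P j" "cnt P i = cnt P j" shows "i = j"
  using cnt_strict[of P i j] cnt_strict[of P j i] assms by (cases "i < j"; cases "j < i") auto

lemma cnt_exists: "1 \<le> k \<Longrightarrow> k \<le> cnt P m \<Longrightarrow> \<exists>j. 1 \<le> j \<and> j \<le> m \<and> P j \<and> cnt P j = k"
proof (induction m)
  case 0 then show ?case by simp
next
  case (Suc m)
  show ?case
  proof (cases "k \<le> cnt P m")
    case True with Suc show ?thesis by force
  next
    case False
    then have "P (Suc m)" "k = cnt P (Suc m)" using Suc.prems by (auto simp: cnt_Suc split: if_splits)
    then show ?thesis by auto
  qed
qed

lemma cnt_cong: "(\<And>t. 1 \<le> t \<Longrightarrow> t \<le> j \<Longrightarrow> P t = Q t) \<Longrightarrow> cnt P j = cnt Q j"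
  unfolding cnt_def by (rule arg_cong[where f=card]) auto

fun hgt :: "nat set \<Rightarrow> nat \<Rightarrow> nat" where
  "hgt S 0 = 0"
| "hgt S (Suc i) = (if Suc i \<in> S then Suc (hgt S i) else hgt S i - 1)"

definition Ut :: "nat \<Rightarrow> nat set \<Rightarrow> nat \<Rightarrow> bool" where
  "Ut n S i \<longleftrightarrow> 1 \<le> i \<and> i \<le> 2*n \<and> (if i \<le> n then i \<in> S else (2*n+1-i) \<notin> S \<and> 0 < hgt S (2*n - i))"

definition Dt :: "nat \<Rightarrow> nat set \<Rightarrow> nat \<Rightarrow> bool" where
  "Dt n S i \<longleftrightarrow> 1 \<le> i \<and> i \<le> 2*n \<and> (if i \<le> n then i \<notin> S \<and> 0 < hgt S (i - 1) else (2*n+1-i) \<in> S)"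

definition Hf :: "nat \<Rightarrow> nat set \<Rightarrow> nat \<Rightarrow> nat" where
  "Hf n S j = (if j \<le> n then hgt S j else hgt S (2*n - j))"

definition piS :: "nat \<Rightarrow> nat set \<Rightarrow> nat \<Rightarrow> nat" where
  "piS n S i = (if Ut n S i then (THE j. Dt n S j \<and> cnt (Dt n S) j = cnt (Ut n S) i)
     else if Dt n S i then (THE j. Ut n S j \<and> cnt (Ut n S) j = cnt (Dt n S) i) else i)"

lemma hgt_Suc': "0 < k \<Longrightarrow> hgt S k = (if k \<in> S then Suc (hgt S (k-1)) else hgt S (k-1) - 1)"
  by (cases k) auto

lemma K: "j \<le> 2*n \<Longrightarrow> cnt (Ut n S) j = cnt (Dt n S) j + Hf n S j"
proof (induction j)
  case 0 then show ?case by (simp add: Hf_def)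
next
  case (Suc j)
  show ?case
  proof (cases "Suc j \<le> n")
    case True
    then show ?thesis using Suc by (auto simp: cnt_Suc Ut_def Dt_def Hf_def)
  next
    case False
    define k where "k = 2*n - j"
    have k: "0 < k" "2*n + 1 - Suc j = k" "2*n - Suc j = k - 1" "Hf n S j = hgt S k" "Hf n S (Suc j) = hgt S (k-1)"
      using False Suc.prems by (auto simp: k_def Hf_def dest: le_antisym[of j n])
    have U: "Ut n S (Suc j) \<longleftrightarrow> k \<notin> S \<and> 0 < hgt S (k-1)" using False Suc.prems k by (auto simp: Ut_def)
    have D: "Dt n S (Suc j) \<longleftrightarrow> k \<in> S" using False Suc.prems k by (auto simp: Dt_def)
    show ?thesis using Suc k U D hgt_Suc'[of k S] by (auto simp: cnt_Suc)
  qed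
qed

lemma Hf_pos_U: "Ut n S i \<Longrightarrow> 0 < Hf n S i"
  using hgt_Suc'[of i S] by (auto simp: Ut_def Hf_def split: if_splits)

lemma cnt_UD_U: "Ut n S i \<Longrightarrow> cnt (Dt n S) i < cnt (Ut n S) i"
  using K[of i n S] Hf_pos_U[of n S i] by (auto simp: Ut_def)

lemma Hf_pos_D: "Dt n S i \<Longrightarrow> 0 < Hf n S (i - 1)"
proof -
  assume D: "Dt n S i"
  show ?thesis
  proof (cases "i \<le> n")
    case True then show ?thesis using D by (auto simp: Dt_def Hf_def)
  next
    case False
    define k where "k = 2*n+1-i"
    have "k \<in> S" "0 < k" using D False by (auto simp: Dt_def Hf_def k_def)
    moreover have "Hf n S (i - 1) = hgt S k" using D False by (cases "i = Suc n") (auto simp: Dt_def Hf_def k_def)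
    ultimately show ?thesis using hgt_Suc'[of k S] by simp
  qed
qed

lemma cnt_UD_D: "Dt n S i \<Longrightarrow> cnt (Dt n S) (i-1) < cnt (Ut n S) (i-1)"
  using K[of "i-1" n S] Hf_pos_D[of n S i] by (auto simp: Dt_def)

lemma Hf_F: assumes "1 \<le> i" "i \<le> 2*n" "\<not> Ut n S i" "\<not> Dt n S i" shows "Hf n S (i - 1) = 0"
proof (cases "i \<le> n")
  case True then show ?thesis using assms by (auto simp: Dt_def Ut_def Hf_def)
next
  case False
  define k where "k = 2*n+1-i"
  have "k \<notin> S" "0 < k" "hgt S (k-1) = 0"
    using assms False by (auto simp: Dt_def Ut_def Hf_def k_def)
  moreover have "Hf n S (i - 1) = hgt S k" using assms False by (cases "i = Suc n") (auto simp: Hf_def k_def)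
  ultimately show ?thesis using hgt_Suc'[of k S] by simp
qed

lemma cnt_F: assumes "1 \<le> i" "i \<le> 2*n" "\<not> Ut n S i" "\<not> Dt n S i"
  shows "cnt (Ut n S) (i-1) = cnt (Dt n S) (i-1)"
  using K[of "i-1" n S] Hf_F[OF assms] assms by auto

lemma UD_sym: assumes "1 \<le> i" "i \<le> 2*n" shows "Ut n S i \<longleftrightarrow> Dt n S (2*n+1-i)"
proof (cases "i \<le> n")
  case True then show ?thesis using assms by (auto simp: Dt_def Ut_def)
next
  case False then show ?thesis using assms by (auto simp: Dt_def Ut_def Suc_diff_Suc)
qed

lemma DU_sym: assumes "1 \<le> i" "i \<le> 2*n" shows "Dt n S i \<longleftrightarrow> Ut n S (2*n+1-i)"
  using UD_sym[of "2*n+1-i" n S] assms by auto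

lemma UD_disj: "Ut n S i \<Longrightarrow> \<not> Dt n S i"
  by (auto simp: Ut_def Dt_def split: if_splits)

lemma U_range: "Ut n S i \<Longrightarrow> 1 \<le> i \<and> i \<le> 2*n" by (simp add: Ut_def)
lemma D_range: "Dt n S i \<Longrightarrow> 1 \<le> i \<and> i \<le> 2*n" by (simp add: Dt_def)

lemma tot: "cnt (Ut n S) (2*n) = cnt (Dt n S) (2*n)"
  using K[of "2*n" n S] by (simp add: Hf_def)

lemma refl1: "j \<le> 2*n \<Longrightarrow> cnt (Ut n S) (2*n - j) + cnt (Dt n S) j = cnt (Dt n S) (2*n)"
proof (induction j)
  case 0 then show ?case using tot by simp
next
  case (Suc j)
  have e: "2*n - j = Suc (2*n - Suc j)" using Suc.prems by simp
  have "Ut n S (2*n - j) \<longleftrightarrow> Dt n S (Suc j)"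
    using UD_sym[of "2*n-j" n S] Suc.prems by (simp add: Suc_diff_le)
  then show ?case using Suc e by (simp add: cnt_Suc)
qed

lemma refl2: "j \<le> 2*n \<Longrightarrow> cnt (Dt n S) (2*n - j) + cnt (Ut n S) j = cnt (Dt n S) (2*n)"
proof (induction j)
  case 0 then show ?case by simp
next
  case (Suc j)
  have e: "2*n - j = Suc (2*n - Suc j)" using Suc.prems by simp
  have "Dt n S (2*n - j) \<longleftrightarrow> Ut n S (Suc j)"
    using DU_sym[of "2*n-j" n S] Suc.prems by (simp add: Suc_diff_le)
  then show ?case using Suc e by (simp add: cnt_Suc)
qed

lemma pi_U: assumes U: "Ut n S i"
  shows "Dt n S (piS n S i) \<and> cnt (Dt n S) (piS n S i) = cnt (Ut n S) i \<and> i < piS n S i"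
proof -
  have r: "1 \<le> i" "i \<le> 2*n" using U by (auto simp: Ut_def)
  have "1 \<le> cnt (Ut n S) i" using cnt_pos U r by blast
  moreover have "cnt (Ut n S) i \<le> cnt (Dt n S) (2*n)" using cnt_mono[OF r(2), of "Ut n S"] tot by simp
  ultimately obtain j where j: "Dt n S j" "cnt (Dt n S) j = cnt (Ut n S) i"
    using cnt_exists by blast
  have th: "(THE j. Dt n S j \<and> cnt (Dt n S) j = cnt (Ut n S) i) = j"
    by (rule the_equality) (use j cnt_uniq[of "Dt n S"] in auto)
  have pj: "piS n S i = j" using U th by (simp add: piS_def)
  have "i < j"
  proof (rule ccontr)
    assume "\<not> i < j"
    then have "cnt (Dt n S) j \<le> cnt (Dt n S) i" by (intro cnt_mono) simp
    then show False using j cnt_UD_U[OF U] by simp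
  qed
  then show ?thesis using pj j by simp
qed

lemma pi_D: assumes D: "Dt n S i"
  shows "Ut n S (piS n S i) \<and> cnt (Ut n S) (piS n S i) = cnt (Dt n S) i \<and> piS n S i < i"
proof -
  have r: "1 \<le> i" "i \<le> 2*n" using D by (auto simp: Dt_def)
  have "1 \<le> cnt (Dt n S) i" using cnt_pos D r by blast
  moreover have "cnt (Dt n S) i \<le> cnt (Ut n S) (2*n)" using cnt_mono[OF r(2), of "Dt n S"] tot by simp
  ultimately obtain j where j: "Ut n S j" "cnt (Ut n S) j = cnt (Dt n S) i"
    using cnt_exists by blast
  have th: "(THE j. Ut n S j \<and> cnt (Ut n S) j = cnt (Dt n S) i) = j"
    by (rule the_equality) (use j cnt_uniq[of "Ut n S"] in auto)
  have pj: "piS n S i = j" using D th UD_disj by (auto simp: piS_def)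
  have "j < i"
  proof (rule ccontr)
    assume "\<not> j < i"
    moreover have "j \<noteq> i" using j D UD_disj by blast
    ultimately have ji: "i - 1 < j" by simp
    have i1: "i = Suc (i - 1)" using r by simp
    have "cnt (Dt n S) i = Suc (cnt (Dt n S) (i-1))" using D i1 cnt_Suc[of "Dt n S" "i-1"] by simp
    moreover have "cnt (Ut n S) (i-1) < cnt (Ut n S) j" using cnt_strict[of "Ut n S", OF j(1) ji] .
    ultimately show False using j cnt_UD_D[OF D] by simp
  qed
  then show ?thesis using pj j by simp
qed

lemma pi_F: "\<not> Ut n S i \<Longrightarrow> \<not> Dt n S i \<Longrightarrow> piS n S i = i"
  by (simp add: piS_def)

lemma pi_invol: "piS n S (piS n S i) = i"
proof -
  consider "Ut n S i" | "Dt n S i" | "\<not> Ut n S i \<and> \<not> Dt n S i" by blast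
  then show ?thesis
  proof cases
    case 1
    note a = pi_U[OF 1]
    note b = pi_D[of n S "piS n S i"]
    show ?thesis using a b cnt_uniq[of "Ut n S" "piS n S (piS n S i)" i] 1 by auto
  next
    case 2
    note a = pi_D[OF 2]
    note b = pi_U[of n S "piS n S i"]
    show ?thesis using a b cnt_uniq[of "Dt n S" "piS n S (piS n S i)" i] 2 by auto
  qed (simp add: pi_F)
qed

lemma pi_centro_U: assumes U: "Ut n S i" shows "piS n S i + piS n S (2*n+1-i) = 2*n+1"
proof -
  have r: "1 \<le> i" "i \<le> 2*n" using U by (auto simp: Ut_def)
  define j where "j = piS n S i"
  have j: "Dt n S j" "cnt (Dt n S) j = cnt (Ut n S) i" using pi_U[OF U] by (auto simp: j_def)
  have rj: "1 \<le> j" "j \<le> 2*n" using j by (auto simp: Dt_def)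
  define i' where "i' = 2*n+1-i"
  have Di': "Dt n S i'" using UD_sym[OF r] U by (simp add: i'_def)
  note l = pi_D[OF Di']
  have Uj': "Ut n S (2*n+1-j)" using DU_sym[OF rj] j by simp
  have c1: "cnt (Ut n S) (2*n+1-j) + cnt (Dt n S) (j-1) = cnt (Dt n S) (2*n)"
    using refl1[of "j-1" n S] rj by (simp add: Suc_diff_le)
  have c2: "cnt (Dt n S) (2*n+1-i) + cnt (Ut n S) (i-1) = cnt (Dt n S) (2*n)"
    using refl2[of "i-1" n S] r by (simp add: Suc_diff_le)
  have c3: "cnt (Dt n S) j = Suc (cnt (Dt n S) (j-1))"
    using cnt_Suc[of "Dt n S" "j-1"] rj j by simp
  have c4: "cnt (Ut n S) i = Suc (cnt (Ut n S) (i-1))"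
    using cnt_Suc[of "Ut n S" "i-1"] r U by simp
  have "cnt (Ut n S) (2*n+1-j) = cnt (Dt n S) i'" using c1 c2 c3 c4 j unfolding i'_def by simp
  then have "piS n S i' = 2*n+1-j" using cnt_uniq[of "Ut n S" "piS n S i'" "2*n+1-j"] l Uj' by simp
  then show ?thesis using rj by (simp add: j_def i'_def)
qed

lemma pi_centro: assumes "1 \<le> i" "i \<le> 2*n" shows "piS n S i + piS n S (2*n+1-i) = 2*n+1"
proof -
  consider "Ut n S i" | "Dt n S i" | "\<not> Ut n S i \<and> \<not> Dt n S i" by blast
  then show ?thesis
  proof cases
    case 1 then show ?thesis by (rule pi_centro_U)
  next
    case 2
    then have "Ut n S (2*n+1-i)" using DU_sym[OF assms] by simp
    from pi_centro_U[OF this] show ?thesis using assms by simp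
  next
    case 3
    then have "\<not> Ut n S (2*n+1-i) \<and> \<not> Dt n S (2*n+1-i)" using DU_sym[OF assms] UD_sym[OF assms] by simp
    then show ?thesis using 3 assms by (simp add: pi_F)
  qed
qed

lemma incU: "Ut n S x \<Longrightarrow> Ut n S y \<Longrightarrow> x < y \<Longrightarrow> piS n S x < piS n S y"
proof -
  assume a: "Ut n S x" "Ut n S y" "x < y"
  have "cnt (Ut n S) x < cnt (Ut n S) y" using cnt_strict[of "Ut n S"] a by blast
  then have "cnt (Dt n S) (piS n S x) < cnt (Dt n S) (piS n S y)" using pi_U a by simp
  then show ?thesis using cnt_mono[of "piS n S y" "piS n S x" "Dt n S"] by (cases "piS n S x < piS n S y") auto
qed

lemma incD: "Dt n S x \<Longrightarrow> Dt n S y \<Longrightarrow> x < y \<Longrightarrow> piS n S x < piS n S y"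
proof -
  assume a: "Dt n S x" "Dt n S y" "x < y"
  have "cnt (Dt n S) x < cnt (Dt n S) y" using cnt_strict[of "Dt n S"] a by blast
  then have "cnt (Ut n S) (piS n S x) < cnt (Ut n S) (piS n S y)" using pi_D a by simp
  then show ?thesis using cnt_mono[of "piS n S y" "piS n S x" "Ut n S"] by (cases "piS n S x < piS n S y") auto
qed

lemma DF: assumes d: "Dt n S d" and f: "\<not> Ut n S f" "\<not> Dt n S f" "1 \<le> f" "f < d"
  shows "f < piS n S d"
proof (rule ccontr)
  assume "\<not> f < piS n S d"
  moreover have "piS n S d \<noteq> f" using pi_D[OF d] f by auto
  ultimately have e: "piS n S d < f" by simp
  have rd: "d \<le> 2*n" using d by (simp add: Dt_def)
  have "cnt (Ut n S) (piS n S d) \<le> cnt (Ut n S) (f - 1)" using e by (intro cnt_mono) simp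
  also have "\<dots> = cnt (Dt n S) (f - 1)" using cnt_F[of f n S] f rd by simp
  also have "\<dots> < cnt (Dt n S) d" using cnt_strict[of "Dt n S", OF d] f by simp
  finally show False using pi_D[OF d] by simp
qed

lemma avoid_from_inc:
  fixes E :: "nat \<Rightarrow> bool"
  assumes "\<And>x y. 1 \<le> x \<Longrightarrow> x < y \<Longrightarrow> y \<le> m \<Longrightarrow> E x = E y \<Longrightarrow> f x < f y"
  shows "avoids321 m f"
  unfolding avoids321_def
proof clarify
  fix i j k assume a: "1 \<le> i" "i < j" "j < k" "k \<le> m" "f j < f i" "f k < f j"
  have h1: "E i \<noteq> E j" using assms[of i j] a by auto
  have h2: "E j \<noteq> E k" using assms[of j k] a by auto
  have h3: "E i \<noteq> E k" using assms[of i k] a by auto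
  show False using h1 h2 h3 by blast
qed

lemma pi_avoid: "avoids321 (2*n) (piS n S)"
proof (rule avoid_from_inc[where E = "Ut n S"])
  fix x y assume a: "1 \<le> x" "x < y" "y \<le> 2*n" "Ut n S x = Ut n S y"
  show "piS n S x < piS n S y"
  proof (cases "Ut n S x")
    case True then show ?thesis using incU a by simp
  next
    case False
    then have ny: "\<not> Ut n S y" using a by simp
    show ?thesis
    proof (cases "Dt n S x")
      case Dx: True
      show ?thesis
      proof (cases "Dt n S y")
        case True then show ?thesis using incD Dx a by simp
      next
        case False then show ?thesis using pi_F[OF ny False] pi_D[OF Dx] a by simp
      qed
    next
      case nDx: False
      show ?thesis
      proof (cases "Dt n S y")
        case True then show ?thesis using DF[OF True False nDx] a pi_F[OF False nDx] by simp
      next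
        case False then show ?thesis using pi_F[OF ny False] pi_F[OF \<open>\<not> Ut n S x\<close> nDx] a by simp
      qed
    qed
  qed
qed

lemma pi_range: "1 \<le> i \<Longrightarrow> i \<le> 2*n \<Longrightarrow> 1 \<le> piS n S i \<and> piS n S i \<le> 2*n"
proof -
  assume r: "1 \<le> i" "i \<le> 2*n"
  consider "Ut n S i" | "Dt n S i" | "\<not> Ut n S i \<and> \<not> Dt n S i" by blast
  then show ?thesis
  proof cases
    case 1 then show ?thesis using pi_U[OF 1] D_range[of n S "piS n S i"] by simp
  next
    case 2 then show ?thesis using pi_D[OF 2] U_range[of n S "piS n S i"] by simp
  qed (use r pi_F in auto)
qed

lemma pi_out: "\<not> (1 \<le> i \<and> i \<le> 2*n) \<Longrightarrow> piS n S i = i"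
  using pi_F U_range D_range by blast

lemma pi_permutes: "piS n S permutes {1..2*n}"
proof (rule bij_imp_permutes)
  show "bij_betw (piS n S) {1..2 * n} {1..2 * n}"
    by (rule bij_betw_byWitness[where f'="piS n S"]) (use pi_invol pi_range in auto)
qed (use pi_out in auto)

lemma pi_IC: "piS n S \<in> ICinv321 (2*n)"
  unfolding ICinv321_def is_involution_def centrosymmetric_def
  using pi_permutes pi_invol pi_avoid pi_centro by auto

lemma pi_Phi: assumes "S \<subseteq> {1..n}" shows "{i \<in> {1..n}. i < piS n S i} = S"
proof -
  have "i < piS n S i \<longleftrightarrow> i \<in> S" if "i \<in> {1..n}" for i
  proof -
    consider "Ut n S i" | "Dt n S i" | "\<not> Ut n S i \<and> \<not> Dt n S i" by blast
    then show ?thesis using that pi_U[of n S i] pi_D[of n S i] pi_F[of n S i]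
      by cases (auto simp: Ut_def Dt_def)
  qed
  then show ?thesis using assms by auto
qed

locale ICm =
  fixes m :: nat and p :: "nat \<Rightarrow> nat"
  assumes IC: "p \<in> ICinv321 m"
begin

lemma perm: "p permutes {1..m}" using IC by (simp add: ICinv321_def)
lemma inv: "1 \<le> i \<Longrightarrow> i \<le> m \<Longrightarrow> p (p i) = i" using IC by (simp add: ICinv321_def is_involution_def)
lemma av: "avoids321 m p" using IC by (simp add: ICinv321_def)
lemma rng: "1 \<le> i \<Longrightarrow> i \<le> m \<Longrightarrow> 1 \<le> p i \<and> p i \<le> m"
  using permutes_in_image[OF perm, of i] by simp
lemma pinj: "p x = p y \<Longrightarrow> x = y" using permutes_inj[OF perm] by (simp add: inj_eq)
lemma out: "\<not> (1 \<le> i \<and> i \<le> m) \<Longrightarrow> p i = i" using permutes_not_in[OF perm] by simp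

lemma no321: "1 \<le> i \<Longrightarrow> i < j \<Longrightarrow> j < k \<Longrightarrow> k \<le> m \<Longrightarrow> p j < p i \<Longrightarrow> p k < p j \<Longrightarrow> False"
  using av unfolding avoids321_def by blast

lemma G1: assumes "1 \<le> e" "e < e'" "e' \<le> m" "e < p e" "e' < p e'" shows "p e < p e'"
proof (rule ccontr)
  assume "\<not> p e < p e'"
  moreover have "p e \<noteq> p e'" using pinj assms by auto
  ultimately have "p e' < p e" by simp
  moreover have "p e' \<le> m" using rng assms by simp
  moreover have "p (p e') = e'" using inv assms by simp
  ultimately show False using no321[of e e' "p e'"] assms by simp
qed

lemma G2: assumes "1 \<le> d" "d < d'" "d' \<le> m" "p d < d" "p d' < d'" shows "p d < p d'"
proof (rule ccontr)
  assume "\<not> p d < p d'"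
  moreover have "p d \<noteq> p d'" using pinj assms by auto
  ultimately have lt: "p d' < p d" by simp
  have r: "1 \<le> p d'" "p d \<le> m" using rng assms by auto
  have "p (p d') = d'" "p (p d) = d" using inv assms by auto
  then have "p (p d') < p (p d)" using G1[of "p d'" "p d"] lt r assms by simp
  then show False using \<open>p (p d') = d'\<close> \<open>p (p d) = d\<close> assms by simp
qed

lemma G3: assumes "1 \<le> e" "e < f" "f < p e" "p f = f" shows False
proof -
  have "p e \<le> m" using rng assms by (cases "e \<le> m") (auto simp: out)
  moreover have "e \<le> m" using rng assms out by (cases "e \<le> m") auto
  moreover have "p (p e) = e" using inv assms calculation by simp
  ultimately show False using no321[of e f "p e"] assms by simp
qed

lemma Ninc: assumes "1 \<le> x" "x < y" "y \<le> m" "p x \<le> x" "p y \<le> y" shows "p x < p y"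
proof (cases "p x = x")
  case True
  show ?thesis
  proof (cases "p y = y")
    case True then show ?thesis using \<open>p x = x\<close> assms by simp
  next
    case False
    then have "p y < y" using assms by simp
    have r: "1 \<le> p y" using rng assms by simp
    have "p (p y) = y" using inv assms by simp
    show ?thesis
    proof (rule ccontr)
      assume "\<not> p x < p y"
      then have "p y < x" using \<open>p x = x\<close> pinj[of x y] assms by (cases "p y = x") auto
      then show False using G3[of "p y" x] r \<open>p (p y) = y\<close> \<open>p x = x\<close> assms by simp
    qed
  qed
next
  case False
  then have "p x < x" using assms by simp
  show ?thesis
  proof (cases "p y = y")
    case True then show ?thesis using \<open>p x < x\<close> assms by simp
  next
    case False then show ?thesis using G2 \<open>p x < x\<close> assms by simp
  qed
qed

definition E where "E t \<longleftrightarrow> t < p t"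
definition Dp where "Dp t \<longleftrightarrow> p t < t"

lemma L1: assumes "1 \<le> i" "i \<le> m" "p i = i" shows "cnt E (i-1) \<le> cnt Dp (i-1)"
  unfolding cnt_def
proof (rule card_inj_on_le[where f=p])
  show "inj_on p {t \<in> {1..i - 1}. E t}" using pinj by (auto intro: inj_onI)
  show "finite {t \<in> {1..i - 1}. Dp t}" by simp
  show "p ` {t \<in> {1..i - 1}. E t} \<subseteq> {t \<in> {1..i - 1}. Dp t}"
  proof
    fix y assume "y \<in> p ` {t \<in> {1..i - 1}. E t}"
    then obtain t where t: "y = p t" "1 \<le> t" "t \<le> i - 1" "t < p t" by (auto simp: E_def)
    have ti: "t < i" using t assms by simp
    have "p t \<noteq> i" using pinj[of t i] assms t by auto
    moreover have "\<not> i < p t" using G3[of t i] t ti assms by auto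
    ultimately have "p t < i" by simp
    moreover have "p (p t) = t" using inv t assms by simp
    ultimately show "y \<in> {t \<in> {1..i - 1}. Dp t}" using t by (auto simp: Dp_def)
  qed
qed

lemma L2: assumes "1 \<le> i" "i \<le> m" "p i < i" shows "cnt Dp (i-1) < cnt E (i-1)"
proof -
  define A where "A = {t \<in> {1..i - 1}. E t}"
  define B where "B = {t \<in> {1..i - 1}. Dp t}"
  have pi1: "1 \<le> p i" using rng assms by simp
  have ppi: "p (p i) = i" using inv assms by simp
  have inA: "p i \<in> A" using pi1 ppi assms by (auto simp: A_def E_def)
  have finite_A: "finite A" by (simp add: A_def)
  have "card B \<le> card (A - {p i})"
  proof (rule card_inj_on_le[where f=p])
    show "inj_on p B" using pinj by (auto intro: inj_onI)
    show "finite (A - {p i})" by (simp add: A_def)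
    show "p ` B \<subseteq> A - {p i}"
    proof
      fix y assume "y \<in> p ` B"
      then obtain t where t: "y = p t" "1 \<le> t" "t \<le> i - 1" "p t < t" by (auto simp: B_def Dp_def)
      have r: "1 \<le> p t" using rng t assms by simp
      have "p (p t) = t" using inv t assms by simp
      moreover have "p t \<noteq> p i" using pinj[of t i] t assms by auto
      ultimately show "y \<in> A - {p i}" using t r by (auto simp: A_def E_def)
    qed
  qed
  moreover have "card (A - {p i}) = card A - 1" using inA by (simp add: A_def)
  moreover have "card A \<ge> 1" using inA finite_A by (cases "card A") auto
  ultimately show ?thesis by (simp add: cnt_def A_def B_def)
qed

lemma G4: assumes "1 \<le> e" "e \<le> m" "e < p e" shows "cnt Dp (p e) = cnt E e"
proof -
  define A where "A = {t \<in> {1..e}. E t}"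
  define B where "B = {t \<in> {1..p e}. Dp t}"
  have re: "p e \<le> m" using rng assms by simp
  have "card A \<le> card B"
  proof (rule card_inj_on_le[where f=p])
    show "inj_on p A" using pinj by (auto intro: inj_onI)
    show "finite B" by (simp add: B_def)
    show "p ` A \<subseteq> B"
    proof
      fix y assume "y \<in> p ` A"
      then obtain t where t: "y = p t" "1 \<le> t" "t \<le> e" "t < p t" by (auto simp: A_def E_def)
      have "p t \<le> p e" using G1[of t e] t assms by (cases "t = e") auto
      moreover have "p (p t) = t" using inv t assms by simp
      ultimately show "y \<in> B" using t by (auto simp: B_def Dp_def)
    qed
  qed
  moreover have "card B \<le> card A"
  proof (rule card_inj_on_le[where f=p])
    show "inj_on p B" using pinj by (auto intro: inj_onI)
    show "finite A" by (simp add: A_def)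
    show "p ` B \<subseteq> A"
    proof
      fix y assume "y \<in> p ` B"
      then obtain t where t: "y = p t" "1 \<le> t" "t \<le> p e" "p t < t" by (auto simp: B_def Dp_def)
      have r: "1 \<le> p t" using rng t re by simp
      have ppt: "p (p t) = t" using inv t re by simp
      have "p t \<le> e"
      proof (rule ccontr)
        assume "\<not> p t \<le> e"
        then have "p e < p (p t)" using G1[of e "p t"] assms ppt t rng[of t] re by simp
        then show False using ppt t by simp
      qed
      then show "y \<in> A" using t r ppt by (auto simp: A_def E_def)
    qed
  qed
  ultimately show ?thesis by (simp add: cnt_def A_def B_def)
qed

end


lemma types_eq:
  assumes IC: "p \<in> ICinv321 (2*n)" and Sd: "S = {i \<in> {1..n}. i < p i}"
  and r: "1 \<le> i" "i \<le> 2*n"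
  shows "(i < p i \<longleftrightarrow> Ut n S i) \<and> (p i < i \<longleftrightarrow> Dt n S i)"
proof -
  interpret ICm "2*n" p by (unfold_locales) (rule IC)
  have left: "p i < i \<longleftrightarrow> Dt n S i" if "1 \<le> i" "i \<le> n" for i
    using that
  proof (induction i rule: less_induct)
    case (less i)
    have c1: "cnt E (i-1) = cnt (Ut n S) (i-1)"
      by (rule cnt_cong) (use less.prems in \<open>auto simp: E_def Ut_def Sd\<close>)
    have c2: "cnt Dp (i-1) = cnt (Dt n S) (i-1)"
      by (rule cnt_cong) (use less in \<open>auto simp: Dp_def\<close>)
    have c3: "cnt (Ut n S) (i-1) = cnt (Dt n S) (i-1) + hgt S (i-1)"
    proof -
      have "i - 1 \<le> n" "i - 1 \<le> 2*n" using less.prems by auto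
      then show ?thesis using K[of "i-1" n S] unfolding Hf_def by presburger
    qed
    consider "p i < i" | "p i = i" | "i < p i" by linarith
    then show ?case
    proof cases
      case 1
      then have "cnt Dp (i-1) < cnt E (i-1)" using L2 less.prems by simp
      then show ?thesis using 1 c1 c2 c3 less.prems by (auto simp: Dt_def Sd)
    next
      case 2
      then have "cnt E (i-1) \<le> cnt Dp (i-1)" using L1 less.prems by simp
      then show ?thesis using 2 c1 c2 c3 less.prems by (auto simp: Dt_def Sd)
    next
      case 3
      then show ?thesis using less.prems by (auto simp: Dt_def Sd)
    qed
  qed
  show ?thesis
  proof (cases "i \<le> n")
    case True
    then show ?thesis using left[of i] r by (auto simp: Ut_def Sd)
  next
    case False
    define i' where "i' = 2*n+1-i"
    have r': "1 \<le> i'" "i' \<le> n" using r False by (auto simp: i'_def)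
    have ii: "2*n+1-i' = i" using r by (simp add: i'_def)
    have cs: "centrosymmetric (2*n) p" using IC by (simp add: ICinv321_def)
    have "i' \<in> {1..2*n}" using r' by simp
    then have "p i' + p (2*n+1-i') = 2*n+1" using cs unfolding centrosymmetric_def by blast
    then have "p i' + p i = 2*n+1" using ii by simp
    then have pi: "p i = 2*n+1 - p i'" by simp
    have ri: "1 \<le> p i'" "p i' \<le> 2*n" using rng r' by auto
    have "i < p i \<longleftrightarrow> p i' < i'" using pi ri r by (auto simp: i'_def)
    moreover have "p i < i \<longleftrightarrow> i' < p i'" using pi ri r by (auto simp: i'_def)
    moreover have "Ut n S i \<longleftrightarrow> Dt n S i'" using UD_sym[of i n S] r by (simp add: i'_def)
    moreover have "Dt n S i \<longleftrightarrow> Ut n S i'" using DU_sym[of i n S] r by (simp add: i'_def)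
    moreover have "Ut n S i' \<longleftrightarrow> i' < p i'" using r' by (auto simp: Ut_def Sd)
    ultimately show ?thesis using left[OF r'] by blast
  qed
qed

lemma IC_eq_piS:
  assumes IC: "p \<in> ICinv321 (2*n)"
  shows "p = piS n {i \<in> {1..n}. i < p i}"
proof
  fix i
  define S where "S = {i \<in> {1..n}. i < p i}"
  interpret ICm "2*n" p by (unfold_locales) (rule IC)
  have ty: "\<And>i. 1 \<le> i \<Longrightarrow> i \<le> 2*n \<Longrightarrow> (i < p i \<longleftrightarrow> Ut n S i) \<and> (p i < i \<longleftrightarrow> Dt n S i)"
    using types_eq[OF IC S_def] by blast
  have cE: "cnt E j = cnt (Ut n S) j" if "j \<le> 2*n" for j
    by (rule cnt_cong) (use ty that in \<open>auto simp: E_def\<close>)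
  have cD: "cnt Dp j = cnt (Dt n S) j" if "j \<le> 2*n" for j
    by (rule cnt_cong) (use ty that in \<open>auto simp: Dp_def\<close>)
  show "p i = piS n S i"
  proof (cases "1 \<le> i \<and> i \<le> 2*n")
    case False
    then show ?thesis using out pi_out by simp
  next
    case True
    have ri: "1 \<le> p i" "p i \<le> 2*n" using rng True by auto
    consider "i < p i" | "p i < i" | "p i = i" by linarith
    then show ?thesis
    proof cases
      case 1
      have U: "Ut n S i" using ty True 1 by blast
      have ppi: "p (p i) = i" using inv True by simp
      have D: "Dt n S (p i)" using ty[of "p i"] ri ppi 1 by simp
      have "cnt (Dt n S) (p i) = cnt (Ut n S) i" using G4[of i] True 1 cE cD ri by simp
      then show ?thesis using pi_U[OF U] cnt_uniq[of "Dt n S" "p i" "piS n S i"] D by simp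
    next
      case 2
      have D: "Dt n S i" using ty True 2 by blast
      have ppi: "p (p i) = i" using inv True by simp
      have U: "Ut n S (p i)" using ty[of "p i"] ri ppi 2 by simp
      have "cnt Dp (p (p i)) = cnt E (p i)" using G4[of "p i"] ri ppi 2 by simp
      then have "cnt (Ut n S) (p i) = cnt (Dt n S) i" using ppi cE cD ri True by simp
      then show ?thesis using pi_D[OF D] cnt_uniq[of "Ut n S" "p i" "piS n S i"] U by simp
    next
      case 3
      then have "\<not> Ut n S i" "\<not> Dt n S i" using ty[of i] True by auto
      then show ?thesis using pi_F 3 by simp
    qed
  qed
qed


lemma Phi_bij: "bij_betw (\<lambda>p. {i \<in> {1..n}. i < p i}) (ICinv321 (2*n)) (Pow {1..n})"
proof (rule bij_betw_byWitness[where f'="piS n"])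
  show "\<forall>a\<in>ICinv321 (2 * n). piS n {i \<in> {1..n}. i < a i} = a" using IC_eq_piS by metis
  show "\<forall>a'\<in>Pow {1..n}. {i \<in> {1..n}. i < piS n a' i} = a'" using pi_Phi by blast
  show "(\<lambda>p. {i \<in> {1..n}. i < p i}) ` ICinv321 (2 * n) \<subseteq> Pow {1..n}" by auto
  show "piS n ` Pow {1..n} \<subseteq> ICinv321 (2 * n)" using pi_IC by auto
qed

definition fS :: "nat set \<Rightarrow> nat set" where "fS S = {i \<in> S. Suc i \<notin> S}"

lemma Des_eq:
  assumes IC: "p \<in> ICinv321 (2*n)"
  shows "DesPlus n p = fS {i \<in> {1..n}. i < p i}"
proof -
  interpret ICm "2*n" p by (unfold_locales) (rule IC)
  have cs: "centrosymmetric (2*n) p" using IC by (simp add: ICinv321_def)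
  have "p (Suc i) < p i \<longleftrightarrow> i < p i \<and> \<not> (Suc i \<le> n \<and> Suc i < p (Suc i))" if r: "1 \<le> i" "i \<le> n" for i
  proof
    assume d: "p (Suc i) < p i"
    have ri: "p i \<le> 2*n" "p (Suc i) \<le> 2*n" using rng r by auto
    have "i < p i"
    proof (rule ccontr)
      assume "\<not> i < p i"
      then have "p i \<le> i" by simp
      moreover have "\<not> Suc i < p (Suc i)" using d \<open>p i \<le> i\<close> by simp
      ultimately have "p i < p (Suc i)" using Ninc[of i "Suc i"] r by simp
      then show False using d by simp
    qed
    moreover have "\<not> (Suc i \<le> n \<and> Suc i < p (Suc i))"
      using G1[of i "Suc i"] r d \<open>i < p i\<close> by auto
    ultimately show "i < p i \<and> \<not> (Suc i \<le> n \<and> Suc i < p (Suc i))" by simp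
  next
    assume a: "i < p i \<and> \<not> (Suc i \<le> n \<and> Suc i < p (Suc i))"
    show "p (Suc i) < p i"
    proof (cases "Suc i \<le> n")
      case True
      then have "p (Suc i) \<le> Suc i" using a by simp
      moreover have "p (Suc i) \<noteq> p i" using pinj[of "Suc i" i] by auto
      ultimately show ?thesis using a by simp
    next
      case False
      then have "i = n" using r by simp
      have "n \<in> {1..2*n}" using r \<open>i = n\<close> by simp
      then have "p n + p (2*n+1-n) = 2*n+1" using cs unfolding centrosymmetric_def by blast
      then show ?thesis using a \<open>i = n\<close> by simp
    qed
  qed
  then show ?thesis unfolding DesPlus_def fS_def by auto
qed

lemma sum_Pow_Suc:
  "(\<Sum>S\<in>Pow {1..Suc m}. g S) = (\<Sum>S\<in>Pow {1..m}. g S) + (\<Sum>T\<in>Pow {1..m}. g (insert (Suc m) T))"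
proof -
  have e: "{1..Suc m} = insert (Suc m) {1..m}" by (auto)
  have "(\<Sum>S\<in>Pow {1..Suc m}. g S) = (\<Sum>S\<in>Pow {1..m}. g S) + (\<Sum>S\<in>insert (Suc m) ` Pow {1..m}. g S)"
    unfolding e Pow_insert by (rule sum.union_disjoint) auto
  moreover have "inj_on (insert (Suc m)) (Pow {1..m})"
  proof (rule inj_onI)
    fix x y assume a: "x \<in> Pow {1..m}" "y \<in> Pow {1..m}" "insert (Suc m) x = insert (Suc m) y"
    have "Suc m \<notin> x" "Suc m \<notin> y" using a by auto
    then show "x = y" using a(3) by (metis Diff_insert_absorb)
  qed
  ultimately show ?thesis by (simp add: sum.reindex)
qed

lemma fS_facts:
  assumes "T \<subseteq> {1..m}"
  shows "fS T - {Suc m} = fS T"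
    and "fS (insert (Suc m) T) - {Suc m} = fS T - {m}"
    and "fS (insert (Suc m) T) = insert (Suc m) (fS T - {m})"
    and "Suc m \<notin> fS T - {m}"
    and "finite (fS T - {m})"
proof -
  have f: "finite T" using assms finite_subset by blast
  show "fS T - {Suc m} = fS T" using assms by (auto simp: fS_def)
  show "fS (insert (Suc m) T) - {Suc m} = fS T - {m}" using assms by (auto simp: fS_def)
  show "fS (insert (Suc m) T) = insert (Suc m) (fS T - {m})" using assms by (auto simp: fS_def)
  show "Suc m \<notin> fS T - {m}" using assms by (auto simp: fS_def)
  show "finite (fS T - {m})" using f by (simp add: fS_def)
qed

definition PP :: "'a::comm_ring_1 \<Rightarrow> nat \<Rightarrow> 'a" where "PP q m = (\<Sum>S\<in>Pow {1..m}. q ^ \<Sum>(fS S))"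
definition GG :: "'a::comm_ring_1 \<Rightarrow> nat \<Rightarrow> 'a" where "GG q m = (\<Sum>S\<in>Pow {1..m}. q ^ \<Sum>(fS S - {m}))"
definition DD :: "'a::comm_ring_1 \<Rightarrow> nat \<Rightarrow> 'a" where "DD q m = (\<Sum>S\<in>Pow {1..m}. q ^ card (fS S))"
definition HH :: "'a::comm_ring_1 \<Rightarrow> nat \<Rightarrow> 'a" where "HH q m = (\<Sum>S\<in>Pow {1..m}. q ^ card (fS S - {m}))"

lemma PP_Suc: "PP q (Suc m) = PP q m + q ^ Suc m * GG q m"
proof -
  have "PP q (Suc m) = PP q m + (\<Sum>T\<in>Pow {1..m}. q ^ \<Sum>(fS (insert (Suc m) T)))"
    unfolding PP_def by (rule sum_Pow_Suc)
  also have "(\<Sum>T\<in>Pow {1..m}. q ^ \<Sum>(fS (insert (Suc m) T))) = (\<Sum>T\<in>Pow {1..m}. q ^ Suc m * q ^ \<Sum>(fS T - {m}))"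
  proof (rule sum.cong)
    fix T assume "T \<in> Pow {1..m}"
    then have T: "T \<subseteq> {1..m}" by simp
    show "q ^ \<Sum>(fS (insert (Suc m) T)) = q ^ Suc m * q ^ \<Sum>(fS T - {m})"
      using fS_facts[OF T] by (simp add: power_add)
  qed simp
  finally show ?thesis by (simp add: GG_def sum_distrib_left)
qed

lemma GG_Suc: "GG q (Suc m) = PP q m + GG q m"
proof -
  have "GG q (Suc m) = (\<Sum>S\<in>Pow {1..m}. q ^ \<Sum>(fS S - {Suc m})) + (\<Sum>T\<in>Pow {1..m}. q ^ \<Sum>(fS (insert (Suc m) T) - {Suc m}))"
    unfolding GG_def by (rule sum_Pow_Suc)
  also have "\<dots> = PP q m + GG q m" unfolding PP_def GG_def
    by (intro arg_cong2[where f="(+)"] sum.cong refl) (simp_all only: Pow_iff fS_facts(1) fS_facts(2))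
  finally show ?thesis .
qed

lemma DD_Suc: "DD q (Suc m) = DD q m + q * HH q m"
proof -
  have "DD q (Suc m) = DD q m + (\<Sum>T\<in>Pow {1..m}. q ^ card (fS (insert (Suc m) T)))"
    unfolding DD_def by (rule sum_Pow_Suc)
  also have "(\<Sum>T\<in>Pow {1..m}. q ^ card (fS (insert (Suc m) T))) = (\<Sum>T\<in>Pow {1..m}. q * q ^ card (fS T - {m}))"
  proof (rule sum.cong)
    fix T assume "T \<in> Pow {1..m}"
    then have T: "T \<subseteq> {1..m}" by simp
    show "q ^ card (fS (insert (Suc m) T)) = q * q ^ card (fS T - {m})"
      using fS_facts[OF T] by simp
  qed simp
  finally show ?thesis by (simp add: HH_def sum_distrib_left)
qed

lemma HH_Suc: "HH q (Suc m) = DD q m + HH q m"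
proof -
  have "HH q (Suc m) = (\<Sum>S\<in>Pow {1..m}. q ^ card (fS S - {Suc m})) + (\<Sum>T\<in>Pow {1..m}. q ^ card (fS (insert (Suc m) T) - {Suc m}))"
    unfolding HH_def by (rule sum_Pow_Suc)
  also have "\<dots> = DD q m + HH q m" unfolding DD_def HH_def
    by (intro arg_cong2[where f="(+)"] sum.cong refl) (simp_all only: Pow_iff fS_facts(1) fS_facts(2))
  finally show ?thesis .
qed

lemma dpoly_DD: "dpoly n q = DD q n"
proof -
  have "dpoly n q = (\<Sum>p\<in>ICinv321 (2*n). q ^ card (fS {i \<in> {1..n}. i < p i}))"
    unfolding dpoly_def desPlus_def by (rule sum.cong) (auto simp: Des_eq)
  also have "\<dots> = DD q n" unfolding DD_def by (rule sum.reindex_bij_betw[OF Phi_bij])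
  finally show ?thesis .
qed

lemma ppoly_PP: "ppoly n q = PP q n"
proof -
  have "ppoly n q = (\<Sum>p\<in>ICinv321 (2*n). q ^ \<Sum>(fS {i \<in> {1..n}. i < p i}))"
    unfolding ppoly_def majPlus_def by (rule sum.cong) (auto simp: Des_eq)
  also have "\<dots> = PP q n" unfolding PP_def by (rule sum.reindex_bij_betw[OF Phi_bij])
  finally show ?thesis .
qed

lemma alg1:
  fixes a0 a1 a2 h0 h1 q :: "'a::comm_ring_1"
  assumes "a2 = a1 + q*h1" "h1 = a0 + h0" "a1 = a0 + q*h0"
  shows "a2 = 2*a1 + (q-1)*a0"
proof -
  have e: "q*h0 = a1 - a0" using assms(3) by simp
  have "a2 = a1 + (q*a0 + q*h0)" using assms(1,2) by (simp add: distrib_left)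
  also have "\<dots> = a1 + (q*a0 + (a1 - a0))" using e by simp
  also have "\<dots> = 2*a1 + (q-1)*a0" by (simp add: algebra_simps mult_2)
  finally show ?thesis .
qed
lemma alg2:
  fixes a0 a1 a2 g0 g1 q q1 :: "'a::comm_ring_1"
  assumes "a2 = a1 + (q*q1)*g1" "g1 = a0 + g0" "a1 = a0 + q1*g0"
  shows "a2 = (1+q)*a1 + (q*q1 - q)*a0"
proof -
  have e: "q1*g0 = a1 - a0" using assms(3) by simp
  have "a2 = a1 + (q*q1*a0 + q*(q1*g0))" using assms(1,2) by (simp add: distrib_left mult.assoc)
  also have "\<dots> = a1 + (q*q1*a0 + q*(a1 - a0))" using e by simp
  also have "\<dots> = (1+q)*a1 + (q*q1 - q)*a0" by (simp add: algebra_simps)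
  finally show ?thesis .
qed

theorem mainTheorem7:
  fixes q :: "'a::comm_ring_1" and n :: nat
  assumes "n \<ge> 2"
  shows "dpoly n q = 2 * dpoly (n - 1) q + (q - 1) * dpoly (n - 2) q
       \<and> ppoly n q = (1 + q) * ppoly (n - 1) q + (q ^ n - q) * ppoly (n - 2) q"
proof -
  obtain k where n: "n = Suc (Suc k)" using assms by (metis add_2_eq_Suc le_Suc_ex)
  have d1: "DD q (Suc (Suc k)) = DD q (Suc k) + q * HH q (Suc k)" by (rule DD_Suc)
  have d2: "HH q (Suc k) = DD q k + HH q k" by (rule HH_Suc)
  have d3: "DD q (Suc k) = DD q k + q * HH q k" by (rule DD_Suc)
  have p1: "PP q (Suc (Suc k)) = PP q (Suc k) + q ^ Suc (Suc k) * GG q (Suc k)" by (rule PP_Suc)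
  have p2: "GG q (Suc k) = PP q k + GG q k" by (rule GG_Suc)
  have p3: "PP q (Suc k) = PP q k + q ^ Suc k * GG q k" by (rule PP_Suc)
  have "DD q (Suc (Suc k)) = 2 * DD q (Suc k) + (q - 1) * DD q k"
    by (rule alg1[OF d1 d2 d3])
  moreover have "PP q (Suc (Suc k)) = (1 + q) * PP q (Suc k) + (q ^ Suc (Suc k) - q) * PP q k"
  proof -
    have p1': "PP q (Suc (Suc k)) = PP q (Suc k) + (q * q ^ Suc k) * GG q (Suc k)"
      using p1 by (simp only: power_Suc)
    show ?thesis using alg2[OF p1' p2 p3] by (simp only: power_Suc)
  qed
  ultimately show ?thesis by (simp add: n dpoly_DD ppoly_PP)
qed

end
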